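(* Let $N\ge K\ge 1$ be integers and let $\mathcal{S}$ be the collection of all subsets $S\subseteq[N]$ with $1\le |S|\le K$. For every $S\in\mathcal{S}$ and all $v,v^\star\in[0,1]^N$, $$\frac{1}{2(K+1)^4}\sum_{i\in S}(v_i-v^\star_i)^2\;\le\;\|\mu(S,v)-\mu(S,v^\star)\|_2^2\;\le\;2\,\mathbb{E}_{i\sim\mu(S,v^\star)}\big[\ell_{\log}(\mu(S,v),i)-\ell_{\log}(\mu(S,v^\star),i)\big].$$
   Context: For $S\in\mathcal{S}$ and $v\in[0,1]^N$, $\mu(S,v)$ is the probability distribution on $\{0,1,\dots,N\}$ (viewed as a vector in $\mathbb{R}^{N+1}$) given by $\mu_i(S,v)=\frac{v_i}{1+\sum_{j\in S}v_j}$ for $i\in S$, $\mu_0(S,v)=\frac{1}{1+\sum_{j\in S}v_j}$, and $\mu_i(S,v)=0$ for $i\notin S\cup\{0\}$. For a distribution $\mu$ on $\{0,\dots,N\}$ and an outcome $i$, the log loss is $\ell_{\log}(\mu,i)=-\log\mu_i$. *)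

theory Defs
  imports "HOL-Analysis.Analysis" "HOL-Library.Extended_Real"
begin

text \<open>MNL choice distribution mu(S,v) on outcomes {0,...,N}; items are 1..N, 0 = no purchase.
 Vectors v in [0,1]^N are functions nat => real, only the values at 1..N matter.\<close>
definition mnl :: "nat set \<Rightarrow> (nat \<Rightarrow> real) \<Rightarrow> nat \<Rightarrow> real" where
  "mnl S v i = (if i = 0 then 1 / (1 + (\<Sum>j\<in>S. v j))
                else if i \<in> S then v i / (1 + (\<Sum>j\<in>S. v j)) else 0)"

definition logloss :: "(nat \<Rightarrow> real) \<Rightarrow> nat \<Rightarrow> ereal" where
  "logloss \<mu> i = (if \<mu> i > 0 then ereal (- ln (\<mu> i)) else \<infinity>)"

definition exp_logloss_regret :: "nat \<Rightarrow> nat set \<Rightarrow> (nat \<Rightarrow> real) \<Rightarrow> (nat \<Rightarrow> real) \<Rightarrow> ereal" where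
  "exp_logloss_regret N S v vs =
     (\<Sum>i\<in>{i\<in>{0..N}. mnl S vs i > 0}.
        ereal (mnl S vs i) * (logloss (mnl S v) i - logloss (mnl S vs) i))"

end

theory Submission
  imports Defs
begin

lemma key_ineq:
  fixes p q :: real
  assumes "0 < p" "p \<le> 1" "0 < q" "q \<le> 1"
  shows "(p - q)\<^sup>2 \<le> 2 * (q * (ln q - ln p) - q + p)"
proof -
  define h where "h x = 2 * (q * (ln q - ln x) - q + x) - (x - q)\<^sup>2" for x :: real
  have d: "DERIV h x :> 2 * (- q / x + 1) - 2 * (x - q)" if "0 < x" for x
    unfolding h_def using that
    by (auto intro!: derivative_eq_intros simp: field_simps power2_eq_square)
  have eq: "2 * (- q / x + 1) - 2 * (x - q) = 2 * (x - q) * (1 - x) / x" if "0 < x" for x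
    using that by (simp add: field_simps)
  have "h q \<le> h p"
  proof (cases "p \<le> q")
    case True
    show ?thesis
    proof (rule DERIV_nonpos_imp_nonincreasing[of p q h, OF True])
      fix x assume x: "p \<le> x" "x \<le> q"
      have "0 < x" using x assms by linarith
      have "2 * (x - q) * (1 - x) \<le> 0"
      proof -
        have a: "2*(x-q) \<le> 0" "0 \<le> 1-x" using x assms by auto
        show ?thesis using mult_nonpos_nonneg[OF a] .
      qed
      hence "2 * (x - q) * (1 - x) / x \<le> 0"
        using \<open>0 < x\<close> by (intro divide_nonpos_pos) auto
      with \<open>0 < x\<close> show "\<exists>y. DERIV h x :> y \<and> y \<le> 0" using d eq by metis
    qed
  next
    case False
    show ?thesis
    proof (rule DERIV_nonneg_imp_nondecreasing[of q p h])
      show "q \<le> p" using False by simp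
      fix x assume x: "q \<le> x" "x \<le> p"
      have "0 < x" using x assms by linarith
      moreover have "0 \<le> 2 * (x - q) * (1 - x) / x"
        using x assms \<open>0 < x\<close> by (intro divide_nonneg_pos mult_nonneg_nonneg) auto
      ultimately show "\<exists>y. DERIV h x :> y \<and> y \<ge> 0" using d eq by metis
    qed
  qed
  moreover have "h q = 0" by (simp add: h_def)
  ultimately show ?thesis by (simp add: h_def)
qed

lemma sum_split0:
  fixes g :: "nat \<Rightarrow> real"
  assumes "S \<subseteq> {1..N}" "\<forall>i\<in>{1..N}-S. g i = 0"
  shows "(\<Sum>i\<in>{0..N}. g i) = g 0 + (\<Sum>i\<in>S. g i)"
proof -
  have "(\<Sum>i\<in>{0..N}. g i) = g 0 + (\<Sum>i\<in>{Suc 0..N}. g i)"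
    by (simp add: sum.atLeast_Suc_atMost)
  also have "(\<Sum>i\<in>{Suc 0..N}. g i) = (\<Sum>i\<in>S. g i)"
    using assms by (intro sum.mono_neutral_right) auto
  finally show ?thesis .
qed

lemma mnl_facts:
  assumes S: "S \<subseteq> {1..N}" and w: "\<forall>i\<in>{1..N}. 0 \<le> w i \<and> w i \<le> 1"
  shows "(\<Sum>i\<in>{0..N}. mnl S w i) = 1"
    and "\<And>i. 0 \<le> mnl S w i" and "\<And>i. mnl S w i \<le> 1"
    and "1 + (\<Sum>j\<in>S. w j) \<le> 1 + real (card S)"
    and "0 < mnl S w 0"
proof -
  have fin: "finite S" using S finite_subset by blast
  have z: "0 \<notin> S" using S by auto
  have wn: "\<And>j. j \<in> S \<Longrightarrow> 0 \<le> w j" "\<And>j. j \<in> S \<Longrightarrow> w j \<le> 1" using w S by auto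
  have s0: "0 \<le> (\<Sum>j\<in>S. w j)" using wn by (simp add: sum_nonneg)
  have "(\<Sum>j\<in>S. w j) \<le> (\<Sum>j\<in>S. 1)" using wn by (intro sum_mono) auto
  then show "1 + (\<Sum>j\<in>S. w j) \<le> 1 + real (card S)" by simp
  have "(\<Sum>i\<in>{0..N}. mnl S w i) = mnl S w 0 + (\<Sum>i\<in>S. mnl S w i)"
    using S by (intro sum_split0) (auto simp: mnl_def)
  also have "\<dots> = 1 / (1 + (\<Sum>j\<in>S. w j)) + (\<Sum>i\<in>S. w i / (1 + (\<Sum>j\<in>S. w j)))"
    using z by (auto simp: mnl_def intro!: sum.cong)
  also have "\<dots> = 1" using s0 by (simp add: sum_divide_distrib[symmetric] field_simps)
  finally show "(\<Sum>i\<in>{0..N}. mnl S w i) = 1" .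
  show "0 < mnl S w 0" using s0 by (simp add: mnl_def)
  fix i
  have le: "w i \<le> (\<Sum>j\<in>S. w j)" if "i \<in> S"
    using that fin wn by (intro member_le_sum) auto
  show "0 \<le> mnl S w i" using s0 wn by (auto simp: mnl_def)
  show "mnl S w i \<le> 1" using s0 wn le by (auto simp: mnl_def)
qed

theorem lemma3:
  fixes N K :: nat and S :: "nat set" and v vs :: "nat \<Rightarrow> real"
  assumes "1 \<le> K" and "K \<le> N"
    and "S \<subseteq> {1..N}" and "1 \<le> card S" and "card S \<le> K"
    and "\<forall>i\<in>{1..N}. 0 \<le> v i \<and> v i \<le> 1"
    and "\<forall>i\<in>{1..N}. 0 \<le> vs i \<and> vs i \<le> 1"
  shows "(1 / (2 * (real K + 1) ^ 4) * (\<Sum>i\<in>S. (v i - vs i)\<^sup>2)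
           \<le> (\<Sum>i\<in>{0..N}. (mnl S v i - mnl S vs i)\<^sup>2))
         \<and> (ereal (\<Sum>i\<in>{0..N}. (mnl S v i - mnl S vs i)\<^sup>2)
           \<le> 2 * exp_logloss_regret N S v vs)"
proof
  note S = assms(3)
  have fin: "finite S" using S finite_subset by blast
  have z: "0 \<notin> S" using S by auto
  define p where "p = mnl S v"
  define q where "q = mnl S vs"
  note pf = mnl_facts[OF S assms(6), folded p_def]
  note qf = mnl_facts[OF S assms(7), folded q_def]
  define s where "s = 1 + (\<Sum>j\<in>S. v j)"
  define t where "t = 1 + (\<Sum>j\<in>S. vs j)"
  have sv0: "0 \<le> (\<Sum>j\<in>S. v j)" "0 \<le> (\<Sum>j\<in>S. vs j)"
    using assms(6,7) S by (auto intro!: sum_nonneg)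
  have s1: "1 \<le> s" "s \<le> real K + 1" using pf(4) assms(5) sv0
    by (auto simp: s_def mnl_def)
  have t1: "1 \<le> t" "t \<le> real K + 1" using qf(4) assms(5) sv0
    by (auto simp: t_def mnl_def)
  have p0: "p 0 = 1 / s" and q0: "q 0 = 1 / t" by (auto simp: p_def q_def mnl_def s_def t_def)
  have pi: "p i = v i / s" and qi: "q i = vs i / t" if "i \<in> S" for i
    using that z by (auto simp: p_def q_def mnl_def s_def t_def)
  have split: "(\<Sum>i\<in>{0..N}. (p i - q i)\<^sup>2) = (p 0 - q 0)\<^sup>2 + (\<Sum>i\<in>S. (p i - q i)\<^sup>2)"
    using S by (intro sum_split0) (auto simp: p_def q_def mnl_def)
  have KK: "(s * t)\<^sup>2 \<le> (real K + 1) ^ 4"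
  proof -
    have "s * t \<le> (real K + 1) * (real K + 1)" using s1 t1 by (intro mult_mono) auto
    hence "(s * t)\<^sup>2 \<le> ((real K + 1) * (real K + 1))\<^sup>2"
      using s1 t1 by (intro power_mono) auto
    thus ?thesis by (simp add: power2_eq_square power4_eq_xxxx mult_ac)
  qed
  have pw: "(v i - vs i)\<^sup>2 \<le> 2 * (real K + 1) ^ 4 * ((q 0)\<^sup>2 * (p i - q i)\<^sup>2 + (q i)\<^sup>2 * (p 0 - q 0)\<^sup>2)"
    if "i \<in> S" for i
  proof -
    define X where "X = q 0 * (p i - q i) + q i * (q 0 - p 0)"
    have "v i - vs i = s * t * X" using s1 t1
      by (simp add: X_def p0 q0 pi[OF that] qi[OF that] field_simps)
    hence "(v i - vs i)\<^sup>2 = (s * t)\<^sup>2 * X\<^sup>2" by (simp add: power_mult_distrib)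
    also have "\<dots> \<le> (real K + 1) ^ 4 * X\<^sup>2" using KK by (intro mult_right_mono) auto
    also have "X\<^sup>2 \<le> 2 * ((q 0)\<^sup>2 * (p i - q i)\<^sup>2 + (q i)\<^sup>2 * (p 0 - q 0)\<^sup>2)"
    proof -
      have "0 \<le> (q 0 * (p i - q i) - q i * (q 0 - p 0))\<^sup>2" by simp
      thus ?thesis unfolding X_def by (simp add: power2_eq_square algebra_simps)
    qed
    hence "(real K + 1) ^ 4 * X\<^sup>2 \<le> (real K + 1) ^ 4 * (2 * ((q 0)\<^sup>2 * (p i - q i)\<^sup>2 + (q i)\<^sup>2 * (p 0 - q 0)\<^sup>2))"
      by (intro mult_left_mono) auto
    finally show ?thesis by (simp add: algebra_simps)
  qed
  have sq1: "(\<Sum>i\<in>S. (q i)\<^sup>2) \<le> 1"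
  proof -
    have "(\<Sum>i\<in>S. (q i)\<^sup>2) \<le> (\<Sum>i\<in>S. q i)"
      using qf(2,3) by (intro sum_mono) (simp add: power2_eq_square mult_left_le)
    also have "(\<Sum>i\<in>S. q i) \<le> q 0 + (\<Sum>i\<in>S. q i)" using qf(2) by simp
    also have "\<dots> = 1" using qf(1) S
      by (subst (asm) sum_split0[of S N]) (auto simp: q_def mnl_def)
    finally show ?thesis .
  qed
  have q01: "(q 0)\<^sup>2 \<le> 1" using qf(2,3) by (simp add: power_le_one)
  define D where "D = (\<Sum>i\<in>S. (p i - q i)\<^sup>2)"
  define E where "E = (p 0 - q 0)\<^sup>2"
  have D0: "0 \<le> D" unfolding D_def by (simp add: sum_nonneg)
  have E0: "0 \<le> E" unfolding E_def by simp
  have "(\<Sum>i\<in>S. (v i - vs i)\<^sup>2) \<le> (\<Sum>i\<in>S. 2 * (real K + 1) ^ 4 * ((q 0)\<^sup>2 * (p i - q i)\<^sup>2 + (q i)\<^sup>2 * (p 0 - q 0)\<^sup>2))"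
    using pw by (intro sum_mono) auto
  also have "\<dots> = 2 * (real K + 1) ^ 4 * ((q 0)\<^sup>2 * D + (\<Sum>i\<in>S. (q i)\<^sup>2) * E)"
    by (simp add: D_def E_def sum_distrib_left sum_distrib_right sum.distrib algebra_simps)
  also have "\<dots> \<le> 2 * (real K + 1) ^ 4 * (D + E)"
  proof (intro mult_left_mono)
    have "(q 0)\<^sup>2 * D \<le> 1 * D" using q01 D0 by (intro mult_right_mono) auto
    moreover have "(\<Sum>i\<in>S. (q i)\<^sup>2) * E \<le> 1 * E" using sq1 E0 by (intro mult_right_mono) auto
    ultimately show "(q 0)\<^sup>2 * D + (\<Sum>i\<in>S. (q i)\<^sup>2) * E \<le> D + E" by simp
  qed auto
  finally have "(\<Sum>i\<in>S. (v i - vs i)\<^sup>2) \<le> 2 * (real K + 1) ^ 4 * (D + E)" .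
  moreover have "D + E = (\<Sum>i\<in>{0..N}. (mnl S v i - mnl S vs i)\<^sup>2)"
    using split by (simp add: D_def E_def p_def q_def)
  ultimately show "1 / (2 * (real K + 1) ^ 4) * (\<Sum>i\<in>S. (v i - vs i)\<^sup>2)
           \<le> (\<Sum>i\<in>{0..N}. (mnl S v i - mnl S vs i)\<^sup>2)"
    by (simp add: field_simps)
next
  note S = assms(3)
  define p where "p = mnl S v"
  define q where "q = mnl S vs"
  note pf = mnl_facts[OF S assms(6), folded p_def]
  note qf = mnl_facts[OF S assms(7), folded q_def]
  define U where "U = {i\<in>{0..N}. q i > 0}"
  have finU: "finite U" by (simp add: U_def)
  have R: "exp_logloss_regret N S v vs = (\<Sum>i\<in>U. ereal (q i) * (logloss p i - logloss q i))"
    by (simp add: exp_logloss_regret_def U_def p_def q_def)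
  show "ereal (\<Sum>i\<in>{0..N}. (mnl S v i - mnl S vs i)\<^sup>2) \<le> 2 * exp_logloss_regret N S v vs"
  proof (cases "\<exists>i\<in>U. \<not> p i > 0")
    case True
    then obtain i where i: "i \<in> U" "\<not> p i > 0" by blast
    have "ereal (q i) * (logloss p i - logloss q i) = \<infinity>"
      using i by (auto simp: logloss_def U_def)
    hence "exp_logloss_regret N S v vs = \<infinity>" unfolding R using finU i(1)
      by (subst sum_Pinfty) auto
    thus ?thesis by simp
  next
    case False
    have R2: "exp_logloss_regret N S v vs = ereal (\<Sum>i\<in>U. q i * (ln (q i) - ln (p i)))"
      unfolding R using False
      by (auto simp: U_def logloss_def intro!: sum.cong)
    have sub: "U \<subseteq> {0..N}" by (auto simp: U_def)
    have out: "\<And>i. i \<in> {0..N} - U \<Longrightarrow> q i = 0" proof -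
      fix i assume "i \<in> {0..N} - U"
      hence "\<not> q i > 0" by (auto simp: U_def)
      thus "q i = 0" using qf(2)[of i] by linarith
    qed
    have a: "(\<Sum>i\<in>{0..N}. (p i - q i)\<^sup>2) = (\<Sum>i\<in>U. (p i - q i)\<^sup>2) + (\<Sum>i\<in>{0..N}-U. (p i)\<^sup>2)"
      using sum.subset_diff[OF sub, of "\<lambda>i. (p i - q i)\<^sup>2"] out by simp
    have b: "(\<Sum>i\<in>U. (p i - q i)\<^sup>2) \<le> (\<Sum>i\<in>U. 2 * (q i * (ln (q i) - ln (p i)) - q i + p i))"
      using False pf(3) qf(3) by (intro sum_mono key_ineq) (auto simp: U_def)
    have c: "(\<Sum>i\<in>{0..N}-U. (p i)\<^sup>2) \<le> (\<Sum>i\<in>{0..N}-U. 2 * p i)"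
    proof (intro sum_mono)
      fix i show "(p i)\<^sup>2 \<le> 2 * p i"
        using mult_right_mono[of "p i" 1 "p i"] pf(2,3)[of i] by (simp add: power2_eq_square)
    qed
    have d1: "(\<Sum>i\<in>{0..N}. p i) = (\<Sum>i\<in>U. p i) + (\<Sum>i\<in>{0..N}-U. p i)"
      using sum.subset_diff[OF sub, of p] by simp
    have d2: "(\<Sum>i\<in>{0..N}. q i) = (\<Sum>i\<in>U. q i)"
      using sum.subset_diff[OF sub, of q] out by simp
    have e: "(\<Sum>i\<in>U. 2 * (q i * (ln (q i) - ln (p i)) - q i + p i))
        = 2 * (\<Sum>i\<in>U. q i * (ln (q i) - ln (p i))) - 2 * (\<Sum>i\<in>U. q i) + 2 * (\<Sum>i\<in>U. p i)"
      by (simp add: sum_distrib_left sum_distrib_right sum.distrib sum_subtractf algebra_simps)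
    have f: "(\<Sum>i\<in>{0..N}-U. 2 * p i) = 2 * (\<Sum>i\<in>{0..N}-U. p i)"
      by (simp add: sum_distrib_left)
    have "(\<Sum>i\<in>{0..N}. (p i - q i)\<^sup>2) \<le> 2 * (\<Sum>i\<in>U. q i * (ln (q i) - ln (p i)))"
      using a b c d1 d2 e f pf(1) qf(1) by linarith
    thus ?thesis unfolding R2 by (simp add: p_def q_def)
  qed
qed

end
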